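(* There exist infinitely many positive odd integers $n$ with the property that there exist positive integers $d_1, d_2$, each dividing $\frac{n^2+1}{2}$, such that $d_1+d_2=2n$. Moreover, any such pair satisfies $\gcd(d_1,d_2)=1$ and $d_1d_2=\frac{n^2+1}{2}$. *)

theory Defs
  imports Main
begin

end

theory Submission
  imports Defs "HOL-Library.Infinite_Set"
begin

lemma vieta_aux:
  "\<forall>a b. a + b = s \<longrightarrow> 0 < a \<longrightarrow> 0 < b \<longrightarrow> odd a \<longrightarrow> odd b \<longrightarrow> b \<le> a \<longrightarrow>
     a^2 + b^2 + 4 = m * a * b \<longrightarrow> m = (6::nat)"
proof (induction s rule: less_induct)
  case (less s)
  show ?case
  proof (intro allI impI)
    fix a b :: nat
    assume s: "a + b = s" and a0: "0 < a" and b0: "0 < b" and oa: "odd a" and ob: "odd b"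
      and ba: "b \<le> a" and eq: "a^2 + b^2 + 4 = m * a * b"
    show "m = 6"
    proof (cases "a = b")
      case True
      then have "2*a^2 + 4 = m*a^2" using eq by (simp add: power2_eq_square)
      then have "a dvd 4" by (metis dvd_add_right_iff dvd_mult dvd_triv_right power2_eq_square mult.commute)
      then have "a \<le> 4" by (simp add: dvd_imp_le)
      with oa a0 have "a = 1 \<or> a = 3" by presburger
      moreover have "a \<noteq> 3" using \<open>a dvd 4\<close> by auto
      ultimately have "a = 1" by simp
      then show ?thesis using \<open>2*a^2 + 4 = m*a^2\<close> by simp
    next
      case False
      with ba have ab: "b < a" by simp
      with oa ob have "b + 2 \<le> a" by presburger
      then have "(b+2)^2 \<le> a^2" by (simp add: power_mono)
      then have big: "b^2 + 4 < a^2" using b0 by (simp add: power2_eq_square algebra_simps)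
      have "a^2 < m*a*b" using eq by simp
      then have "a * a < a * (m*b)" by (simp add: power2_eq_square mult.assoc mult.left_commute)
      then have amb: "a < m*b" using a0 by simp
      define c where "c = m*b - a"
      have ac: "a * c = b^2 + 4"
      proof -
        have "a*c = a*(m*b) - a*a" unfolding c_def by (simp add: diff_mult_distrib2)
        moreover have "a*(m*b) = a*a + (b^2+4)" using eq by (simp add: power2_eq_square algebra_simps)
        ultimately show ?thesis by simp
      qed
      have c0: "0 < c" using amb c_def by simp
      have "odd (b^2 + 4)" using ob by simp
      then have oc: "odd c" using ac by (metis even_mult_iff)
      have ca: "c < a"
      proof (rule ccontr)
        assume "\<not> c < a" then have "a*a \<le> a*c" by simp
        then show False using ac big by (simp add: power2_eq_square)
      qed
      have cam: "c + a = m*b" using amb c_def by simp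
      have "c^2 + b^2 + 4 = c*c + a*c" using ac by (simp add: power2_eq_square)
      also have "\<dots> = c*(c+a)" by (simp add: algebra_simps)
      also have "\<dots> = m*c*b" using cam by (simp add: algebra_simps)
      finally have eq2: "c^2 + b^2 + 4 = m * c * b" .
      show "m = 6"
      proof (cases "b \<le> c")
        case True
        then show ?thesis using less.IH[of "c+b"] ca s c0 b0 oc ob eq2 by auto
      next
        case False
        then show ?thesis using less.IH[of "b+c"] ca ab s c0 b0 oc ob eq2
          by (auto simp: algebra_simps)
      qed
    qed
  qed
qed

lemma vieta:
  fixes a b m :: nat
  assumes "0 < a" "0 < b" "odd a" "odd b" "a^2 + b^2 + 4 = m * a * b"
  shows "m = 6"
proof (cases "b \<le> a")
  case True then show ?thesis using vieta_aux assms by blast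
next
  case False
  have "b^2 + a^2 + 4 = m * b * a" using assms(5) by (simp add: algebra_simps)
  moreover have "a \<le> b" using False by simp
  ultimately show ?thesis using vieta_aux[of "b+a" m, rule_format, of b a] assms by blast
qed

lemma dvd_side:
  fixes d1 d2 n N :: nat
  assumes "d1 dvd N" "n^2 + 1 = 2*N" "d1 + d2 = 2*n"
  shows "d1 dvd d1^2 + d2^2 + 4"
proof -
  have d2i: "int d2 = 2*int n - int d1" using assms(3) by linarith
  have n2: "int n^2 + 1 = 2*int N" using assms(2) by (metis of_nat_1 of_nat_add of_nat_mult of_nat_numeral of_nat_power)
  have "int d2^2 + 4 = int d1 * (int d1 - 4*int n) + 8*int N"
    using n2 unfolding d2i by (simp add: power2_eq_square algebra_simps)
  moreover have "int d1 dvd int d1 * (int d1 - 4*int n) + 8*int N" using assms(1) by simp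
  ultimately have "int d1 dvd int (d2^2 + 4)" by simp
  then have "d1 dvd d2^2 + 4" by (simp only: int_dvd_int_iff)
  then show ?thesis by (simp add: power2_eq_square add.assoc)
qed

lemma part2:
  fixes n d1 d2 :: nat
  assumes "n > 0" "odd n" "d1 > 0" "d2 > 0" "d1 dvd (n^2 + 1) div 2" "d2 dvd (n^2 + 1) div 2"
    "d1 + d2 = 2 * n"
  shows "gcd d1 d2 = 1 \<and> d1 * d2 = (n^2 + 1) div 2"
proof -
  obtain t where t: "n = 2*t+1" using assms(2) oddE by blast
  define N where "N = 2*t^2 + 2*t + 1"
  have nN: "n^2 + 1 = 2*N" unfolding N_def t by (simp add: power2_eq_square algebra_simps)
  have ND: "(n^2+1) div 2 = N" using nN by simp
  have oN: "odd N" unfolding N_def by simp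
  have h1: "d1 dvd N" and h2: "d2 dvd N" using assms ND by auto
  have o1: "odd d1" using h1 oN dvd_trans by blast
  have o2: "odd d2" using h2 oN dvd_trans by blast
  define g where "g = gcd d1 d2"
  have "g dvd N" using h1 g_def by (meson dvd_trans gcd_dvd1)
  then have gn1: "g dvd 4*(n^2+1)" using nN by simp
  have "g dvd 2*n" using assms(7) g_def by (metis dvd_add gcd_dvd1 gcd_dvd2)
  then have "g dvd (2*n)*(2*n)" by (rule dvd_mult2)
  moreover have e: "(2*n)*(2*n) = 4*n^2" by (simp add: power2_eq_square)
  ultimately have "g dvd 4*n^2" by metis
  moreover have "4*(n^2+1) = 4*n^2 + 4" by simp
  ultimately have "g dvd 4" using gn1 by (metis dvd_add_right_iff)
  moreover have "odd g" using o1 g_def by (meson dvd_trans gcd_dvd1)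
  ultimately have "g \<le> 4" "odd g" "g > 0" using dvd_imp_le odd_pos by auto
  then have "g = 1 \<or> g = 3" by presburger
  moreover have "g \<noteq> 3" using \<open>g dvd 4\<close> by auto
  ultimately have g1: "g = 1" by simp
  have s1: "d1 dvd d1^2 + d2^2 + 4" using dvd_side[OF h1 nN assms(7)] .
  have s2: "d2 dvd d2^2 + d1^2 + 4" using dvd_side[OF h2 nN] assms(7) by (simp add: add.commute)
  have "d1*d2 dvd d1^2 + d2^2 + 4"
    using s1 s2 g1 g_def by (intro divides_mult) (auto simp: add.commute add.left_commute coprime_iff_gcd_eq_1)
  then obtain m where "d1^2 + d2^2 + 4 = d1*d2*m" by blast
  then have "d1^2 + d2^2 + 4 = m*d1*d2" by (simp add: algebra_simps)
  then have m6: "m = 6" using vieta assms(3,4) o1 o2 by blast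
  have "8*N = (d1+d2)^2 + 4" using nN assms(7) by (simp add: power2_eq_square algebra_simps)
  also have "\<dots> = (d1^2 + d2^2 + 4) + 2*d1*d2" by (simp add: power2_eq_square algebra_simps)
  also have "\<dots> = 8*(d1*d2)" using \<open>d1^2 + d2^2 + 4 = m*d1*d2\<close> m6 by simp
  finally have "N = d1*d2" by simp
  then show ?thesis using g1 g_def ND by simp
qed

lemma gen:
  "\<exists>x y::nat. 0 < x \<and> x \<le> y \<and> odd x \<and> odd y \<and> x^2 + y^2 + 4 = 6*x*y \<and> M < x + y"
proof (induction M)
  case 0
  show ?case by (rule exI[of _ 1], rule exI[of _ 1]) simp
next
  case (Suc M)
  then obtain x y :: nat where h: "0 < x" "x \<le> y" "odd x" "odd y" "x^2 + y^2 + 4 = 6*x*y" "M < x + y"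
    by blast
  define z where "z = 6*y - x"
  have zi: "int z = 6*int y - int x" using h(2) unfolding z_def by simp
  have "int (x^2 + y^2 + 4) = int (6*x*y)" using h(5) by (simp only:)
  then have ei: "int x^2 + int y^2 + 4 = 6*int x*int y" by simp
  have id: "int y^2 + int z^2 + 4 - 6*int y*int z = int x^2 + int y^2 + 4 - 6*int x*int y"
    unfolding zi by algebra
  have "int y^2 + int z^2 + 4 = 6*int y*int z" using id ei by linarith
  then have "int (y^2 + z^2 + 4) = int (6*y*z)" by simp
  then have ez: "y^2 + z^2 + 4 = 6*y*z" by (simp only: of_nat_eq_iff)
  have zx: "z + x = 6*y" using h(2) unfolding z_def by simp
  have "even (z + x)" unfolding zx by simp
  then have "odd z" using h(3) by simp
  moreover have "y \<le> z" "x < z" using h(1,2) unfolding z_def by auto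
  ultimately show ?case using h ez by (intro exI[of _ y] exI[of _ z]) auto
qed

theorem proposition1:
  shows "infinite {n :: nat. n > 0 \<and> odd n \<and>
            (\<exists>d1 d2 :: nat. d1 > 0 \<and> d2 > 0 \<and> d1 dvd (n^2 + 1) div 2 \<and>
               d2 dvd (n^2 + 1) div 2 \<and> d1 + d2 = 2 * n)}
       \<and> (\<forall>n d1 d2 :: nat. n > 0 \<longrightarrow> odd n \<longrightarrow> d1 > 0 \<longrightarrow> d2 > 0 \<longrightarrow>
            d1 dvd (n^2 + 1) div 2 \<longrightarrow> d2 dvd (n^2 + 1) div 2 \<longrightarrow> d1 + d2 = 2 * n \<longrightarrow>
            gcd d1 d2 = 1 \<and> d1 * d2 = (n^2 + 1) div 2)"
proof
  show "infinite {n :: nat. n > 0 \<and> odd n \<and>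
            (\<exists>d1 d2 :: nat. d1 > 0 \<and> d2 > 0 \<and> d1 dvd (n^2 + 1) div 2 \<and>
               d2 dvd (n^2 + 1) div 2 \<and> d1 + d2 = 2 * n)}" (is "infinite ?S")
    unfolding infinite_nat_iff_unbounded
  proof
    fix k :: nat
    obtain x y :: nat where h: "0 < x" "x \<le> y" "odd x" "odd y" "x^2 + y^2 + 4 = 6*x*y" "2*k < x + y"
      using gen by blast
    have "even (x+y)" using h(3,4) by simp
    then obtain n where n: "x + y = 2*n" by blast
    have "4*(n^2+1) = (x+y)^2 + 4" using n by (simp add: power2_eq_square algebra_simps)
    also have "\<dots> = (x^2 + y^2 + 4) + 2*x*y" by (simp add: power2_eq_square algebra_simps)
    also have "\<dots> = 4*(2*(x*y))" using h(5) by simp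
    finally have nn: "n^2 + 1 = 2*(x*y)" by simp
    then have ND: "(n^2+1) div 2 = x*y" by simp
    have "odd (x*y)" using h(3,4) by simp
    have "odd n"
    proof
      assume "even n" then obtain k where "n = 2*k" by blast
      then have "4*k^2 + 1 = 2*(x*y)" using nn by (simp add: power2_eq_square)
      moreover have "odd (4*k^2 + 1)" by simp
      moreover have "even (2*(x*y))" by simp
      ultimately show False by metis
    qed
    have "n > k" using n h(6) by simp
    moreover have "n \<in> ?S" using ND n h(1,2) \<open>odd n\<close> \<open>n > k\<close>
      by (intro CollectI conjI exI[of _ x] exI[of _ y]) auto
    ultimately show "\<exists>n>k. n \<in> ?S" by blast
  qed
next
  show "\<forall>n d1 d2 :: nat. n > 0 \<longrightarrow> odd n \<longrightarrow> d1 > 0 \<longrightarrow> d2 > 0 \<longrightarrow>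
            d1 dvd (n^2 + 1) div 2 \<longrightarrow> d2 dvd (n^2 + 1) div 2 \<longrightarrow> d1 + d2 = 2 * n \<longrightarrow>
            gcd d1 d2 = 1 \<and> d1 * d2 = (n^2 + 1) div 2"
    using part2 by blast
qed

end
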